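(* Let $\mathfrak{g}$, $A$, $E$, $S$, $p_1,\dots,p_r$, $\widehat p_1,\dots,\widehat p_r$ be as in the context and let $h^\vee$ be the dual Coxeter number of $\mathfrak{g}$. Suppose there is a polynomial $f\in\mathbb{C}[u_1,\dots,u_r]$, homogeneous of degree $h^\vee$ for the grading $\deg u_i=d_i-1$, such that $f(\widehat p_1,\dots,\widehat p_r)=0$ in $E$ and the coefficient of $u_1^{h^\vee}$ in $f$ is nonzero. Then $S^{h^\vee}=0$ in $A$.
   Context: Let $\mathfrak{g}$ be a simple finite-dimensional complex Lie algebra with a fixed nondegenerate invariant symmetric bilinear form, used to identify $\mathfrak{g}$ with $\mathfrak{g}^*$. Let $n=\dim\mathfrak{g}$, let $e_1,\dots,e_n$ be an orthonormal basis with coordinates $z_1,\dots,z_n$. Let $R$ be the exterior algebra on odd generators $x_1,\dots,x_n,y_1,\dots,y_n$ ($R\cong\wedge(\mathfrak{g}\oplus\mathfrak{g})$), bigraded with $x_a$ in degree $(1,0)$, $y_a$ in degree $(0,1)$, with $\mathfrak{g}$ acting by derivations so that $(x_a)$, $(y_a)$ transform as coordinates of two copies of $\mathfrak{g}$. Put $X=\sum_a x_ae_a$, $Y=\sum_a y_ae_a$, and for $U=\sum u_ae_a$, $V=\sum v_ae_a$ with $u_a,v_a$ odd set $\{U,V\}=\sum_{a,b}u_av_b[e_a,e_b]$. Let $I\subset R$ be the ideal generated by the $e_c$-coefficients of $\{X,X\}$, $\{X,Y\}$, $\{Y,Y\}$, and $A=R/I$. Let $S$ be the image in $A$ of $\sum_a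 x_ay_a$ (proportional to $\mathrm{Tr}_V(XY)$ for a nontrivial irreducible representation $V$). Let $J\subset R$ be the ideal generated by the $e_c$-coefficients of $\{X,X\}$ and $\{Y,Y\}$, and $E=(R/J)^{\mathfrak{g}}$. For homogeneous $F\in(S\mathfrak{g})^{\mathfrak{g}}$ of degree $\ge2$ define $\widehat F=\sum_{a,b}\frac{\partial^2F}{\partial z_a\partial z_b}(\{X,Y\})\,x_ay_b\in E$, substituting for $z_c$ the $e_c$-coefficient of $\{X,Y\}$. Let $p_1,\dots,p_r$ be homogeneous algebraically independent generators of $(S\mathfrak{g})^{\mathfrak{g}}$ of degrees $d_1=2\le\dots\le d_r$ (so $p_1$ is the quadratic invariant). *)

theory Defs
  imports Complex_Main "HOL-Library.Poly_Mapping" "HOL-Library.Function_Algebras"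
begin

text \<open>g = C^n with basis e_0..e_(n-1), orthonormal for the fixed invariant form,
  and [e_a,e_b] = sum_k sc a b k e_k.  Invariance of the form means
  sc a b k = ([e_a,e_b],e_k) is totally antisymmetric.\<close>

definition lie_vecs :: "nat \<Rightarrow> (nat \<Rightarrow> complex) set" where
  "lie_vecs n = {v. \<forall>k\<ge>n. v k = 0}"

definition lie_br :: "nat \<Rightarrow> (nat \<Rightarrow> nat \<Rightarrow> nat \<Rightarrow> complex) \<Rightarrow>
    (nat \<Rightarrow> complex) \<Rightarrow> (nat \<Rightarrow> complex) \<Rightarrow> (nat \<Rightarrow> complex)" where
  "lie_br n sc v w = (\<lambda>k. if k < n then (\<Sum>a<n. \<Sum>b<n. v a * w b * sc a b k) else 0)"

definition lie_ideal :: "nat \<Rightarrow> (nat \<Rightarrow> nat \<Rightarrow> nat \<Rightarrow> complex) \<Rightarrow> (nat \<Rightarrow> complex) set \<Rightarrow> bool" where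
  "lie_ideal n sc V \<longleftrightarrow> V \<subseteq> lie_vecs n \<and> (\<lambda>_. 0) \<in> V \<and>
     (\<forall>v\<in>V. \<forall>w\<in>V. (\<lambda>k. v k + w k) \<in> V) \<and>
     (\<forall>t. \<forall>v\<in>V. (\<lambda>k. t * v k) \<in> V) \<and>
     (\<forall>v\<in>V. \<forall>w\<in>lie_vecs n. lie_br n sc w v \<in> V)"

text \<open>Simple complex Lie algebra with a nondegenerate invariant symmetric form,
  for which e_0..e_(n-1) is an orthonormal basis.\<close>
definition simple_lie_onb :: "nat \<Rightarrow> (nat \<Rightarrow> nat \<Rightarrow> nat \<Rightarrow> complex) \<Rightarrow> bool" where
  "simple_lie_onb n sc \<longleftrightarrow>
     (\<forall>a<n. \<forall>b<n. \<forall>k<n. sc a b k = - sc b a k) \<and>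
     (\<forall>a<n. \<forall>b<n. \<forall>d<n. \<forall>k<n.
        (\<Sum>m<n. sc a b m * sc m d k + sc b d m * sc m a k + sc d a m * sc m b k) = 0) \<and>
     (\<forall>a<n. \<forall>b<n. \<forall>k<n. sc a b k = sc b k a) \<and>
     (\<exists>a<n. \<exists>b<n. \<exists>k<n. sc a b k \<noteq> 0) \<and>
     (\<forall>V. lie_ideal n sc V \<longrightarrow> V = {\<lambda>_. 0} \<or> V = lie_vecs n)"

definition killing_sq :: "nat \<Rightarrow> (nat \<Rightarrow> nat \<Rightarrow> nat \<Rightarrow> complex) \<Rightarrow> (nat \<Rightarrow> complex) \<Rightarrow> complex" where
  "killing_sq n sc h = (\<Sum>b<n. \<Sum>d<n. (\<Sum>a<n. h a * sc a b d) * (\<Sum>a<n. h a * sc a d b))"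

text \<open>With the invariant form normalised so that long roots
  have squared length 2, the Killing form is 2 h^v times it; over all sl2-triples
  (h,e,f) the minimum positive value of the normalised (h,h) is 2 (attained by the
  coroot of a long root; in general it is twice the Dynkin index, a positive integer).
  Hence h^v is the least positive k with kappa(h,h) = 4k for some sl2-triple.\<close>
definition dual_coxeter :: "nat \<Rightarrow> (nat \<Rightarrow> nat \<Rightarrow> nat \<Rightarrow> complex) \<Rightarrow> nat" where
  "dual_coxeter n sc = (LEAST k::nat. 0 < k \<and>
     (\<exists>h\<in>lie_vecs n. \<exists>e\<in>lie_vecs n. \<exists>f\<in>lie_vecs n.
        lie_br n sc h e = (\<lambda>i. 2 * e i) \<and> lie_br n sc h f = (\<lambda>i. - 2 * f i) \<and>
        lie_br n sc e f = h \<and> killing_sq n sc h = of_nat (4 * k)))"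

type_synonym mpoly = "(nat \<Rightarrow>\<^sub>0 nat) \<Rightarrow>\<^sub>0 complex"

definition mp_var :: "nat \<Rightarrow> mpoly" where
  "mp_var i = Poly_Mapping.single (Poly_Mapping.single i 1) 1"

definition mp_const :: "complex \<Rightarrow> mpoly" where
  "mp_const a = Poly_Mapping.single 0 a"

definition mp_vars_below :: "nat \<Rightarrow> mpoly \<Rightarrow> bool" where
  "mp_vars_below N F \<longleftrightarrow> (\<forall>m\<in>Poly_Mapping.keys F. Poly_Mapping.keys m \<subseteq> {..<N})"

definition mp_homog :: "nat \<Rightarrow> mpoly \<Rightarrow> bool" where
  "mp_homog d F \<longleftrightarrow> (\<forall>m\<in>Poly_Mapping.keys F. (\<Sum>i\<in>Poly_Mapping.keys m. Poly_Mapping.lookup m i) = d)"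

definition mp_whomog :: "(nat \<Rightarrow> nat) \<Rightarrow> nat \<Rightarrow> mpoly \<Rightarrow> bool" where
  "mp_whomog w d F \<longleftrightarrow> (\<forall>m\<in>Poly_Mapping.keys F. (\<Sum>i\<in>Poly_Mapping.keys m. Poly_Mapping.lookup m i * w i) = d)"

definition mp_pderiv :: "nat \<Rightarrow> mpoly \<Rightarrow> mpoly" where
  "mp_pderiv i F = (\<Sum>m\<in>Poly_Mapping.keys F.
     if 0 < Poly_Mapping.lookup m i
     then Poly_Mapping.single (Poly_Mapping.update i (Poly_Mapping.lookup m i - 1) m)
            (of_nat (Poly_Mapping.lookup m i) * Poly_Mapping.lookup F m)
     else 0)"

definition mp_subst :: "mpoly \<Rightarrow> (nat \<Rightarrow> mpoly) \<Rightarrow> mpoly" where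
  "mp_subst G q = (\<Sum>m\<in>Poly_Mapping.keys G. mp_const (Poly_Mapping.lookup G m) * (\<Prod>i\<in>Poly_Mapping.keys m. q i ^ Poly_Mapping.lookup m i))"

text \<open>F in (S g)^g: F is a polynomial in z_0..z_(n-1), killed by the derivation
  z_a \<mapsto> sum_b sc c a b z_b for each c (the action of e_c).\<close>
definition inv_poly :: "nat \<Rightarrow> (nat \<Rightarrow> nat \<Rightarrow> nat \<Rightarrow> complex) \<Rightarrow> mpoly \<Rightarrow> bool" where
  "inv_poly n sc F \<longleftrightarrow> mp_vars_below n F \<and>
     (\<forall>c<n. (\<Sum>a<n. \<Sum>b<n. mp_const (sc c a b) * mp_var b * mp_pderiv a F) = 0)"

section \<open>The exterior algebra R on x_0..x_(n-1) (generator a), y_0..y_(n-1) (generator n+a)\<close>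

text \<open>An element is a coefficient function on finite sets of generators (monomials in
  increasing order).\<close>
type_synonym ext = "nat set \<Rightarrow> complex"

definition ext_sign :: "nat set \<Rightarrow> nat set \<Rightarrow> complex" where
  "ext_sign T U = (-1) ^ card {(i, j). i \<in> T \<and> j \<in> U \<and> j < i}"

definition emul :: "ext \<Rightarrow> ext \<Rightarrow> ext" where
  "emul u v = (\<lambda>S. if finite S then (\<Sum>T\<in>Pow S. ext_sign T (S - T) * u T * v (S - T)) else 0)"

definition eone :: ext where "eone = (\<lambda>S. if S = {} then 1 else 0)"

definition escale :: "complex \<Rightarrow> ext \<Rightarrow> ext" where "escale t u = (\<lambda>S. t * u S)"

definition epow :: "ext \<Rightarrow> nat \<Rightarrow> ext" where "epow u k = (emul u ^^ k) eone"

definition egen :: "nat \<Rightarrow> ext" where "egen i = (\<lambda>S. if S = {i} then 1 else 0)"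

definition ext_carrier :: "nat \<Rightarrow> ext set" where
  "ext_carrier n = {u. \<forall>S. u S \<noteq> 0 \<longrightarrow> S \<subseteq> {..<2*n}}"

definition xg :: "nat \<Rightarrow> ext" where "xg a = egen a"
definition yg :: "nat \<Rightarrow> nat \<Rightarrow> ext" where "yg n a = egen (n + a)"

inductive_set ext_ideal :: "nat \<Rightarrow> ext set \<Rightarrow> ext set" for n G where
  zero: "(\<lambda>_. 0) \<in> ext_ideal n G"
| gen: "g \<in> G \<Longrightarrow> r \<in> ext_carrier n \<Longrightarrow> s \<in> ext_carrier n \<Longrightarrow> emul (emul r g) s \<in> ext_ideal n G"
| add: "u \<in> ext_ideal n G \<Longrightarrow> v \<in> ext_ideal n G \<Longrightarrow> (\<lambda>S. u S + v S) \<in> ext_ideal n G"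

text \<open>e_k-coefficient of {U,V}\<close>
definition brc :: "nat \<Rightarrow> (nat \<Rightarrow> nat \<Rightarrow> nat \<Rightarrow> complex) \<Rightarrow> (nat \<Rightarrow> ext) \<Rightarrow> (nat \<Rightarrow> ext) \<Rightarrow> nat \<Rightarrow> ext" where
  "brc n sc U V k = (\<Sum>a<n. \<Sum>b<n. escale (sc a b k) (emul (U a) (V b)))"

definition ideal_I :: "nat \<Rightarrow> (nat \<Rightarrow> nat \<Rightarrow> nat \<Rightarrow> complex) \<Rightarrow> ext set" where
  "ideal_I n sc = ext_ideal n ((\<lambda>k. brc n sc xg xg k) ` {..<n} \<union> (\<lambda>k. brc n sc xg (yg n) k) ` {..<n}
                          \<union> (\<lambda>k. brc n sc (yg n) (yg n) k) ` {..<n})"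

definition ideal_J :: "nat \<Rightarrow> (nat \<Rightarrow> nat \<Rightarrow> nat \<Rightarrow> complex) \<Rightarrow> ext set" where
  "ideal_J n sc = ext_ideal n ((\<lambda>k. brc n sc xg xg k) ` {..<n} \<union> (\<lambda>k. brc n sc (yg n) (yg n) k) ` {..<n})"

text \<open>S = sum_a x_a y_a (representative in R)\<close>
definition Selt :: "nat \<Rightarrow> ext" where "Selt n = (\<Sum>a<n. emul (xg a) (yg n a))"

text \<open>evaluation of a polynomial at (commuting, even) elements w_i of R\<close>
definition ext_eval :: "mpoly \<Rightarrow> (nat \<Rightarrow> ext) \<Rightarrow> ext" where
  "ext_eval F w = (\<Sum>m\<in>Poly_Mapping.keys F. escale (Poly_Mapping.lookup F m)
      (foldr (\<lambda>i acc. emul (epow (w i) (Poly_Mapping.lookup m i)) acc) (sorted_list_of_set (Poly_Mapping.keys m)) eone))"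

text \<open>\<widehat>F (representative in R of the element of E)\<close>
definition hat :: "nat \<Rightarrow> (nat \<Rightarrow> nat \<Rightarrow> nat \<Rightarrow> complex) \<Rightarrow> mpoly \<Rightarrow> ext" where
  "hat n sc F = (\<Sum>a<n. \<Sum>b<n.
     emul (emul (ext_eval (mp_pderiv a (mp_pderiv b F)) (brc n sc xg (yg n))) (xg a)) (yg n b))"

end

theory Submission
  imports Defs "Jordan_Normal_Form.Spectral_Radius"
begin


lemma plus_ext: "((u::ext) + v) S = u S + v S" by simp
lemma zero_ext: "(0::ext) S = 0" by simp
lemma sum_ext: "(sum f A :: ext) S = (\<Sum>a\<in>A. f a S)"
  by (induction A rule: infinite_finite_induct) auto

lemma emul_infinite: "infinite S \<Longrightarrow> emul u v S = 0"
  by (simp add: emul_def)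

lemma emul_add_left: "emul (u + v) w = emul u w + emul v w"
  by (rule ext) (simp add: emul_def sum.distrib algebra_simps)
lemma emul_add_right: "emul w (u + v) = emul w u + emul w v"
  by (rule ext) (simp add: emul_def sum.distrib algebra_simps)
lemma emul_zero_left: "emul 0 w = 0"
  by (rule ext) (simp add: emul_def)
lemma emul_zero_right: "emul w 0 = 0"
  by (rule ext) (simp add: emul_def)
lemma emul_scale_left: "emul (escale c u) v = escale c (emul u v)"
  by (rule ext) (simp add: emul_def escale_def sum_distrib_left algebra_simps)
lemma emul_scale_right: "emul u (escale c v) = escale c (emul u v)"
  by (rule ext) (simp add: emul_def escale_def sum_distrib_left algebra_simps)
lemma emul_sum_left: "emul (\<Sum>a\<in>A. f a) w = (\<Sum>a\<in>A. emul (f a) w)"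
  by (induction A rule: infinite_finite_induct) (simp_all only: not_False_eq_True sum.infinite sum.empty sum.insert emul_zero_left emul_add_left)
lemma emul_sum_right: "emul w (\<Sum>a\<in>A. f a) = (\<Sum>a\<in>A. emul w (f a))"
  by (induction A rule: infinite_finite_induct) (simp_all only: not_False_eq_True sum.infinite sum.empty sum.insert emul_zero_right emul_add_right)

lemma escale_add: "escale c (u + v) = escale c u + escale c v"
  by (rule ext) (simp add: escale_def algebra_simps)
lemma escale_zero: "escale c 0 = 0"
  by (rule ext) (simp add: escale_def)
lemma escale_zero_left: "escale 0 u = 0"
  by (rule ext) (simp add: escale_def)
lemma escale_escale: "escale c (escale c' u) = escale (c * c') u"
  by (rule ext) (simp add: escale_def)
lemma escale_one: "escale 1 u = u"
  by (rule ext) (simp add: escale_def)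
lemma escale_sum: "escale c (\<Sum>a\<in>A. f a) = (\<Sum>a\<in>A. escale c (f a))"
  by (induction A rule: infinite_finite_induct) (simp_all only: not_False_eq_True sum.infinite sum.empty sum.insert escale_zero escale_add)

lemma ext_sign_empty_left [simp]: "ext_sign {} U = 1"
  by (simp add: ext_sign_def)
lemma ext_sign_empty_right [simp]: "ext_sign T {} = 1"
  by (simp add: ext_sign_def)

lemma ext_sign_union_left:
  assumes "finite A" "finite B" "finite C" "A \<inter> B = {}"
  shows "ext_sign (A \<union> B) C = ext_sign A C * ext_sign B C"
proof -
  have eq: "{(i, j). i \<in> A \<union> B \<and> j \<in> C \<and> j < i} =
      {(i, j). i \<in> A \<and> j \<in> C \<and> j < i} \<union> {(i, j). i \<in> B \<and> j \<in> C \<and> j < i}" by auto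
  have f1: "finite {(i, j). i \<in> A \<and> j \<in> C \<and> j < i}"
    by (rule finite_subset[of _ "A \<times> C"]) (use assms in auto)
  have f2: "finite {(i, j). i \<in> B \<and> j \<in> C \<and> j < i}"
    by (rule finite_subset[of _ "B \<times> C"]) (use assms in auto)
  show ?thesis unfolding ext_sign_def eq
    by (subst card_Un_disjoint[OF f1 f2]) (use assms in \<open>auto simp: power_add\<close>)
qed

lemma ext_sign_union_right:
  assumes "finite A" "finite B" "finite C" "B \<inter> C = {}"
  shows "ext_sign A (B \<union> C) = ext_sign A B * ext_sign A C"
proof -
  have eq: "{(i, j). i \<in> A \<and> j \<in> B \<union> C \<and> j < i} =
      {(i, j). i \<in> A \<and> j \<in> B \<and> j < i} \<union> {(i, j). i \<in> A \<and> j \<in> C \<and> j < i}" by auto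
  have f1: "finite {(i, j). i \<in> A \<and> j \<in> B \<and> j < i}"
    by (rule finite_subset[of _ "A \<times> B"]) (use assms in auto)
  have f2: "finite {(i, j). i \<in> A \<and> j \<in> C \<and> j < i}"
    by (rule finite_subset[of _ "A \<times> C"]) (use assms in auto)
  show ?thesis unfolding ext_sign_def eq
    by (subst card_Un_disjoint[OF f1 f2]) (use assms in \<open>auto simp: power_add\<close>)
qed

lemma emul_assoc: "emul (emul u v) w = emul u (emul v w)"
proof (rule ext)
  fix S :: "nat set"
  show "emul (emul u v) w S = emul u (emul v w) S"
  proof (cases "finite S")
    case False then show ?thesis by (simp add: emul_def)
  next
    case fin: True
    define F1 where "F1 = (\<lambda>(T, A). ext_sign T (S - T) * ext_sign A (T - A) * u A * v (T - A) * w (S - T))"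
    define F2 where "F2 = (\<lambda>(A, B). ext_sign A (S - A) * ext_sign B (S - A - B) * u A * v B * w (S - A - B))"
    have L: "emul (emul u v) w S = (\<Sum>p\<in>Sigma (Pow S) Pow. F1 p)"
    proof -
      have "emul (emul u v) w S = (\<Sum>T\<in>Pow S. \<Sum>A\<in>Pow T. F1 (T, A))"
        using fin by (auto simp: emul_def F1_def sum_distrib_left sum_distrib_right algebra_simps
            intro!: sum.cong dest: finite_subset)
      also have "\<dots> = (\<Sum>p\<in>Sigma (Pow S) Pow. F1 p)"
        by (subst sum.Sigma) (use fin in \<open>auto dest: finite_subset\<close>)
      finally show ?thesis .
    qed
    have R: "emul u (emul v w) S = (\<Sum>p\<in>Sigma (Pow S) (\<lambda>A. Pow (S - A)). F2 p)"
    proof -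
      have "emul u (emul v w) S = (\<Sum>A\<in>Pow S. \<Sum>B\<in>Pow (S - A). F2 (A, B))"
        using fin by (auto simp: emul_def F2_def sum_distrib_left sum_distrib_right algebra_simps
            intro!: sum.cong)
      also have "\<dots> = (\<Sum>p\<in>Sigma (Pow S) (\<lambda>A. Pow (S - A)). F2 p)"
        by (subst sum.Sigma) (use fin in \<open>auto dest: finite_subset\<close>)
      finally show ?thesis .
    qed
    have "(\<Sum>p\<in>Sigma (Pow S) Pow. F1 p) = (\<Sum>p\<in>Sigma (Pow S) (\<lambda>A. Pow (S - A)). F2 p)"
    proof (rule sum.reindex_bij_witness[where j = "\<lambda>(T, A). (A, T - A)" and i = "\<lambda>(A, B). (A \<union> B, A)"])
      fix p assume "p \<in> Sigma (Pow S) Pow"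
      then obtain T A where p: "p = (T, A)" "T \<subseteq> S" "A \<subseteq> T" by auto
      have fT: "finite T" "finite A" "finite (S - T)" "finite (T - A)" "finite (S - A)"
        using p fin by (auto dest: finite_subset)
      have e1: "ext_sign T (S - T) = ext_sign A (S - T) * ext_sign (T - A) (S - T)"
        using ext_sign_union_left[of A "T - A" "S - T"] fT p by (simp add: Un_absorb1 Un_Diff_cancel)
      have e2: "ext_sign A (S - A) = ext_sign A (T - A) * ext_sign A (S - T)"
      proof -
        have "S - A = (T - A) \<union> (S - T)" using p by auto
        then show ?thesis using ext_sign_union_right[of A "T - A" "S - T"] fT by auto
      qed
      have e3: "S - A - (T - A) = S - T" using p by auto
      show "F2 ((\<lambda>(T, A). (A, T - A)) p) = F1 p"
        using p e1 e2 e3 by (simp add: F1_def F2_def algebra_simps)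
      show "(\<lambda>(A, B). (A \<union> B, A)) ((\<lambda>(T, A). (A, T - A)) p) = p" using p by auto
      show "(\<lambda>(T, A). (A, T - A)) p \<in> Sigma (Pow S) (\<lambda>A. Pow (S - A))" using p by auto
    next
      fix q assume "q \<in> Sigma (Pow S) (\<lambda>A. Pow (S - A))"
      then obtain A B where q: "q = (A, B)" "A \<subseteq> S" "B \<subseteq> S - A" by auto
      show "(\<lambda>(T, A). (A, T - A)) ((\<lambda>(A, B). (A \<union> B, A)) q) = q" using q by auto
      show "(\<lambda>(A, B). (A \<union> B, A)) q \<in> Sigma (Pow S) Pow" using q by auto
    qed
    then show ?thesis using L R by simp
  qed
qed

lemma carrier_fin: "u \<in> ext_carrier n \<Longrightarrow> infinite S \<Longrightarrow> u S = 0"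
  unfolding ext_carrier_def using finite_subset by blast

lemma carrier_emul: assumes "u \<in> ext_carrier n" "v \<in> ext_carrier n"
  shows "emul u v \<in> ext_carrier n"
  unfolding ext_carrier_def mem_Collect_eq
proof (intro allI impI)
  fix S assume ne: "emul u v S \<noteq> 0"
  then have fin: "finite S" by (metis emul_infinite)
  then have "(\<Sum>T\<in>Pow S. ext_sign T (S - T) * u T * v (S - T)) \<noteq> 0" using ne by (simp add: emul_def)
  then obtain T where T: "T \<in> Pow S" "ext_sign T (S - T) * u T * v (S - T) \<noteq> 0"
    using sum.not_neutral_contains_not_neutral by blast
  then have "T \<subseteq> {..<2*n}" "S - T \<subseteq> {..<2*n}" using assms unfolding ext_carrier_def by auto
  then show "S \<subseteq> {..<2*n}" using T by auto
qed

lemma carrier_add: assumes "u \<in> ext_carrier n" "v \<in> ext_carrier n" shows "u + v \<in> ext_carrier n"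
  unfolding ext_carrier_def mem_Collect_eq
proof (intro allI impI)
  fix S assume "(u + v) S \<noteq> 0"
  then have "u S \<noteq> 0 \<or> v S \<noteq> 0" by auto
  then show "S \<subseteq> {..<2*n}" using assms unfolding ext_carrier_def by auto
qed
lemma carrier_zero: "0 \<in> ext_carrier n"
  unfolding ext_carrier_def by auto
lemma carrier_scale: "u \<in> ext_carrier n \<Longrightarrow> escale c u \<in> ext_carrier n"
  unfolding ext_carrier_def escale_def by auto
lemma carrier_sum: "(\<And>a. a \<in> A \<Longrightarrow> f a \<in> ext_carrier n) \<Longrightarrow> (\<Sum>a\<in>A. f a) \<in> ext_carrier n"
  by (induction A rule: infinite_finite_induct) (auto simp: carrier_zero carrier_add simp del: plus_fun_apply)
lemma carrier_eone: "eone \<in> ext_carrier n"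
  unfolding ext_carrier_def eone_def by auto
lemma carrier_egen: "i < 2 * n \<Longrightarrow> egen i \<in> ext_carrier n"
  unfolding ext_carrier_def egen_def by auto

lemma emul_eone_left: assumes "u \<in> ext_carrier n" shows "emul eone u = u"
proof (rule ext)
  fix S show "emul eone u S = u S"
  proof (cases "finite S")
    case True
    have "emul eone u S = (\<Sum>T\<in>Pow S. ext_sign T (S - T) * eone T * u (S - T))"
      using True by (simp add: emul_def)
    also have "\<dots> = (\<Sum>T\<in>Pow S. if T = {} then u (S - T) else 0)"
      by (intro sum.cong) (auto simp: eone_def)
    also have "\<dots> = u S" using True by (subst sum.delta) auto
    finally show ?thesis .
  next
    case False then show ?thesis using carrier_fin[OF assms] by (simp add: emul_def)
  qed
qed

lemma emul_eone_right: assumes "u \<in> ext_carrier n" shows "emul u eone = u"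
proof (rule ext)
  fix S show "emul u eone S = u S"
  proof (cases "finite S")
    case True
    have "emul u eone S = (\<Sum>T\<in>Pow S. ext_sign T (S - T) * u T * eone (S - T))"
      using True by (simp add: emul_def)
    also have "\<dots> = (\<Sum>T\<in>Pow S. if T = S then u T else 0)"
      by (intro sum.cong) (auto simp: eone_def)
    also have "\<dots> = u S" using True by (subst sum.delta) auto
    finally show ?thesis .
  next
    case False then show ?thesis using carrier_fin[OF assms] by (simp add: emul_def)
  qed
qed

lemma ideal_zero: "0 \<in> ext_ideal n G"
  unfolding zero_fun_def by (rule ext_ideal.zero)
lemma ideal_add: "u \<in> ext_ideal n G \<Longrightarrow> v \<in> ext_ideal n G \<Longrightarrow> u + v \<in> ext_ideal n G"
  unfolding plus_fun_def by (rule ext_ideal.add)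
lemma ideal_sum: "(\<And>a. a \<in> A \<Longrightarrow> f a \<in> ext_ideal n G) \<Longrightarrow> (\<Sum>a\<in>A. f a) \<in> ext_ideal n G"
  by (induction A rule: infinite_finite_induct) (auto simp: ideal_zero ideal_add simp del: plus_fun_apply)

lemma ideal_scale: "u \<in> ext_ideal n G \<Longrightarrow> escale c u \<in> ext_ideal n G"
proof (induction rule: ext_ideal.induct)
  case zero then show ?case using ext_ideal.zero by (simp add: escale_def)
next
  case (gen g r s)
  then show ?case using ext_ideal.gen[OF gen(1) carrier_scale[OF gen(2)] gen(3), of c]
    by (simp add: emul_scale_left)
next
  case (add u v)
  then show ?case using ideal_add[OF add(3) add(4)] escale_add[of c u v] by (simp add: plus_fun_def)
qed

lemma ideal_mult_left: "u \<in> ext_ideal n G \<Longrightarrow> t \<in> ext_carrier n \<Longrightarrow> emul t u \<in> ext_ideal n G"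
proof (induction rule: ext_ideal.induct)
  case zero then show ?case using ext_ideal.zero emul_zero_right[of t] unfolding zero_fun_def by simp
next
  case (gen g r s)
  then show ?case using ext_ideal.gen[OF gen(1) carrier_emul[OF gen(4) gen(2)] gen(3)]
    by (simp add: emul_assoc)
next
  case (add u v)
  then show ?case using ideal_add[OF add(3) add(4)] emul_add_right[of t u v] by (simp add: plus_fun_def)
qed

lemma ideal_mult_right: "u \<in> ext_ideal n G \<Longrightarrow> t \<in> ext_carrier n \<Longrightarrow> emul u t \<in> ext_ideal n G"
proof (induction rule: ext_ideal.induct)
  case zero then show ?case using ext_ideal.zero emul_zero_left[of t] unfolding zero_fun_def by simp
next
  case (gen g r s)
  then show ?case using ext_ideal.gen[OF gen(1) gen(2) carrier_emul[OF gen(3) gen(4)]]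
    by (simp add: emul_assoc)
next
  case (add u v)
  then show ?case using ideal_add[OF add(3) add(4)] emul_add_left[of u v t] by (simp add: plus_fun_def)
qed

lemma ideal_gen: "g \<in> G \<Longrightarrow> g \<in> ext_carrier n \<Longrightarrow> g \<in> ext_ideal n G"
  using ext_ideal.gen[OF _ carrier_eone carrier_eone, of g G n] by (simp add: emul_eone_left emul_eone_right)

lemma ideal_mono: "u \<in> ext_ideal n G \<Longrightarrow> G \<subseteq> G' \<Longrightarrow> u \<in> ext_ideal n G'"
  by (induction rule: ext_ideal.induct) (auto intro: ext_ideal.intros)



abbreviation lk where "lk \<equiv> Poly_Mapping.lookup"
abbreviation sg where "sg \<equiv> Poly_Mapping.single"

lemma upd_decomp:
  fixes k :: "nat \<Rightarrow>\<^sub>0 nat"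
  shows "(0 < lk k i \<and> Poly_Mapping.update i (lk k i - 1) k = m) \<longleftrightarrow> k = m + sg i 1"
proof
  assume a: "0 < lk k i \<and> Poly_Mapping.update i (lk k i - 1) k = m"
  show "k = m + sg i 1"
    by (rule poly_mapping_eqI) (use a in \<open>auto simp: lookup_add lookup_update lookup_single when_def\<close>)
next
  assume a: "k = m + sg i 1"
  then have "0 < lk k i" by (simp add: lookup_add)
  moreover have "Poly_Mapping.update i (lk k i - 1) k = m"
    by (rule poly_mapping_eqI) (use a in \<open>auto simp: lookup_add lookup_update lookup_single when_def\<close>)
  ultimately show "0 < lk k i \<and> Poly_Mapping.update i (lk k i - 1) k = m" by simp
qed

lemma lookup_pderiv:
  "lk (mp_pderiv i F) m = of_nat (lk m i + 1) * lk F (m + sg i 1)"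
proof -
  have "lk (mp_pderiv i F) m = (\<Sum>k\<in>Poly_Mapping.keys F.
      if k = m + sg i 1 then of_nat (lk k i) * lk F k else 0)"
    unfolding mp_pderiv_def lookup_sum
  proof (intro sum.cong refl)
    fix k
    show "lk (if 0 < lk k i then sg (Poly_Mapping.update i (lk k i - 1) k) (of_nat (lk k i) * lk F k) else 0) m =
       (if k = m + sg i 1 then of_nat (lk k i) * lk F k else 0)"
      using upd_decomp[of k i m] by (auto simp: lookup_single when_def)
  qed
  also have "\<dots> = (if m + sg i 1 \<in> Poly_Mapping.keys F then of_nat (lk (m + sg i 1) i) * lk F (m + sg i 1) else 0)"
    by (subst sum.delta) auto
  also have "\<dots> = of_nat (lk m i + 1) * lk F (m + sg i 1)"
    by (auto simp: lookup_add in_keys_iff)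
  finally show ?thesis .
qed

definition mdeg :: "(nat \<Rightarrow>\<^sub>0 nat) \<Rightarrow> nat" where
  "mdeg m = (\<Sum>i\<in>Poly_Mapping.keys m. lk m i)"

lemma mdeg_superset: "finite A \<Longrightarrow> Poly_Mapping.keys m \<subseteq> A \<Longrightarrow> mdeg m = (\<Sum>i\<in>A. lk m i)"
  unfolding mdeg_def by (rule sum.mono_neutral_left) (auto simp: in_keys_iff)

lemma mdeg_add: "mdeg (m + m') = mdeg m + mdeg m'"
proof -
  let ?A = "Poly_Mapping.keys m \<union> Poly_Mapping.keys m'"
  have "mdeg (m + m') = (\<Sum>i\<in>?A. lk (m + m') i)"
    using keys_add[of m m'] by (intro mdeg_superset) auto
  also have "\<dots> = (\<Sum>i\<in>?A. lk m i) + (\<Sum>i\<in>?A. lk m' i)" by (simp add: lookup_add sum.distrib)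
  also have "\<dots> = mdeg m + mdeg m'"
    using mdeg_superset[of ?A m] mdeg_superset[of ?A m'] by simp
  finally show ?thesis .
qed

lemma mdeg_single: "mdeg (sg i 1) = 1"
  by (simp add: mdeg_def)
lemma mdeg_single' [simp]: "mdeg (sg i (Suc 0)) = 1"
  by (simp add: mdeg_def)

lemma mdeg_zero_iff: "mdeg m = 0 \<longleftrightarrow> m = 0"
proof
  assume "mdeg m = 0"
  then have "\<forall>i\<in>Poly_Mapping.keys m. lk m i = 0" unfolding mdeg_def by simp
  then show "m = 0" by (metis in_keys_iff keys_eq_empty ex_in_conv)
qed (simp add: mdeg_def)

lemma keys_sub_add: "Poly_Mapping.keys (m::nat \<Rightarrow>\<^sub>0 nat) \<subseteq> Poly_Mapping.keys (m + m')"
  by (auto simp: in_keys_iff lookup_add)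

lemma pderiv_keys:
  assumes "m \<in> Poly_Mapping.keys (mp_pderiv i F)"
  shows "m + sg i 1 \<in> Poly_Mapping.keys F"
  using assms by (auto simp: in_keys_iff lookup_pderiv)

lemma pderiv_homog: "mp_homog d F \<Longrightarrow> mp_homog (d - 1) (mp_pderiv i F)"
  unfolding mp_homog_def mdeg_def[symmetric]
proof (intro ballI)
  fix m assume "\<forall>m\<in>Poly_Mapping.keys F. mdeg m = d" "m \<in> Poly_Mapping.keys (mp_pderiv i F)"
  then have "mdeg (m + sg i 1) = d" using pderiv_keys by blast
  then show "mdeg m = d - 1" by (simp add: mdeg_add mdeg_single)
qed

lemma pderiv_vars: "mp_vars_below N F \<Longrightarrow> mp_vars_below N (mp_pderiv i F)"
  unfolding mp_vars_below_def using pderiv_keys keys_sub_add by blast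

lemma deg2_decomp:
  assumes "mdeg m = 2"
  shows "\<exists>a b. m = sg a 1 + sg b 1"
proof -
  have "m \<noteq> 0" using assms by (auto simp: mdeg_def)
  then obtain a where a: "0 < lk m a" by (metis in_keys_iff keys_eq_empty ex_in_conv gr0I)
  define m' where "m' = Poly_Mapping.update a (lk m a - 1) m"
  have m: "m = m' + sg a 1" using upd_decomp[of m a m'] a m'_def by simp
  then have "mdeg m' = 1" using assms by (simp add: mdeg_add mdeg_single)
  then have "m' \<noteq> 0" by (auto simp: mdeg_def)
  then obtain b where b: "0 < lk m' b" by (metis in_keys_iff keys_eq_empty ex_in_conv gr0I)
  define m'' where "m'' = Poly_Mapping.update b (lk m' b - 1) m'"
  have m': "m' = m'' + sg b 1" using upd_decomp[of m' b m''] b m''_def by simp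
  then have "mdeg m'' = 0" using \<open>mdeg m' = 1\<close> by (simp add: mdeg_add mdeg_single)
  then have "m'' = 0" using mdeg_zero_iff by auto
  then show ?thesis using m m' by (auto simp: add.commute)
qed



lemma slo_anti: "simple_lie_onb n sc \<Longrightarrow> \<forall>a<n. \<forall>b<n. \<forall>k<n. sc a b k = - sc b a k"
  unfolding simple_lie_onb_def by (elim conjE) assumption
lemma slo_cyc: "simple_lie_onb n sc \<Longrightarrow> \<forall>a<n. \<forall>b<n. \<forall>k<n. sc a b k = sc b k a"
  unfolding simple_lie_onb_def by (elim conjE) assumption
lemma slo_nz: "simple_lie_onb n sc \<Longrightarrow> \<exists>a<n. \<exists>b<n. \<exists>k<n. sc a b k \<noteq> 0"
  unfolding simple_lie_onb_def by (elim conjE) assumption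
lemma slo_simple0: "simple_lie_onb n sc \<Longrightarrow> \<forall>V. lie_ideal n sc V \<longrightarrow> V = {\<lambda>_. 0} \<or> V = lie_vecs n"
  unfolding simple_lie_onb_def by (elim conjE) assumption
lemma slo_simple: "simple_lie_onb n sc \<Longrightarrow> lie_ideal n sc V \<Longrightarrow> V = {\<lambda>_. 0} \<or> V = lie_vecs n"
  using slo_simple0 by blast

lemma sc_skew2:
  assumes g: "simple_lie_onb n sc" and "a < n" "b < n" "j < n"
  shows "sc a b j = - sc a j b"
proof -
  note cyc = slo_cyc[OF g] and anti = slo_anti[OF g]
  have "sc a b j = sc b j a" using cyc assms by blast
  moreover have "sc a j b = sc j b a" using cyc assms by blast
  moreover have "sc j b a = - sc b j a" using anti assms by blast
  ultimately show ?thesis by simp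
qed

lemma schur:
  assumes g: "simple_lie_onb n sc"
    and Qsym: "\<forall>a<n. \<forall>b<n. Q a b = Q b a"
    and comm: "\<forall>c<n. \<forall>b<n. \<forall>e<n. (\<Sum>a<n. sc c a b * Q a e) + (\<Sum>a<n. sc c a e * Q a b) = 0"
  shows "\<exists>\<mu>. \<forall>a<n. \<forall>b<n. Q a b = (if a = b then \<mu> else 0)"
proof -
  have n: "n > 0" using slo_nz[OF g] by auto
  define M :: "complex mat" where "M = mat n n (\<lambda>(i, j). Q i j)"
  have M: "M \<in> carrier_mat n n" by (simp add: M_def)
  obtain \<mu> where "\<mu> \<in> spectrum M" using spectrum_non_empty[OF M n] by auto
  then obtain v where v: "v \<in> carrier_vec n" "v \<noteq> 0\<^sub>v n" "M *\<^sub>v v = \<mu> \<cdot>\<^sub>v v"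
    unfolding spectrum_def eigenvalue_def eigenvector_def using M by auto
  define V where "V = {w \<in> lie_vecs n. \<forall>k<n. (\<Sum>j<n. Q k j * w j) = \<mu> * w k}"
  have K: "(\<Sum>j<n. Q k j * sc a b j) = (\<Sum>j<n. sc a j k * Q j b)" if "a < n" "b < n" "k < n" for a b k
  proof -
    have "(\<Sum>j<n. Q k j * sc a b j) = (\<Sum>j<n. - (sc a j b * Q j k))"
    proof (rule sum.cong[OF refl])
      fix j assume "j \<in> {..<n}"
      then have j: "j < n" by simp
      have "Q k j = Q j k" using Qsym that j by blast
      moreover have "sc a b j = - sc a j b" using sc_skew2[OF g] that j by blast
      ultimately show "Q k j * sc a b j = - (sc a j b * Q j k)" by simp
    qed
    also have "\<dots> = - (\<Sum>j<n. sc a j b * Q j k)" by (simp add: sum_negf)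
    also have "\<dots> = (\<Sum>j<n. sc a j k * Q j b)"
    proof -
      have "(\<Sum>j<n. sc a j b * Q j k) + (\<Sum>j<n. sc a j k * Q j b) = 0" using comm that by blast
      then show ?thesis by (metis add_eq_0_iff)
    qed
    finally show ?thesis .
  qed
  have ideal: "lie_ideal n sc V"
    unfolding lie_ideal_def
  proof (intro conjI ballI allI)
    show "V \<subseteq> lie_vecs n" by (auto simp: V_def)
    show "(\<lambda>_. 0) \<in> V" by (auto simp: V_def lie_vecs_def)
  next
    fix w u assume "w \<in> V" "u \<in> V"
    then show "(\<lambda>k. w k + u k) \<in> V"
      by (auto simp: V_def lie_vecs_def distrib_left sum.distrib)
  next
    fix t w assume "w \<in> V"
    have "(\<Sum>j<n. Q k j * (t * w j)) = t * (\<Sum>j<n. Q k j * w j)" for k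
      by (simp add: sum_distrib_left algebra_simps)
    then show "(\<lambda>k. t * w k) \<in> V"
      using \<open>w \<in> V\<close> by (auto simp: V_def lie_vecs_def)
  next
    fix w u assume w: "w \<in> V" and u: "u \<in> lie_vecs n"
    show "lie_br n sc u w \<in> V"
      unfolding V_def
    proof (intro CollectI conjI allI impI)
      show "lie_br n sc u w \<in> lie_vecs n" by (simp add: lie_br_def lie_vecs_def)
      fix k assume k: "k < n"
      have "(\<Sum>j<n. Q k j * lie_br n sc u w j) = (\<Sum>j<n. Q k j * (\<Sum>a<n. \<Sum>b<n. u a * w b * sc a b j))"
        by (simp add: lie_br_def)
      also have "\<dots> = (\<Sum>j<n. \<Sum>a<n. \<Sum>b<n. u a * (w b * (Q k j * sc a b j)))"
        by (simp add: sum_distrib_left mult_ac)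
      also have "\<dots> = (\<Sum>a<n. \<Sum>j<n. \<Sum>b<n. u a * (w b * (Q k j * sc a b j)))"
        by (rule sum.swap)
      also have "\<dots> = (\<Sum>a<n. \<Sum>b<n. \<Sum>j<n. u a * (w b * (Q k j * sc a b j)))"
        by (rule sum.cong[OF refl], rule sum.swap)
      also have "\<dots> = (\<Sum>a<n. u a * (\<Sum>b<n. w b * (\<Sum>j<n. Q k j * sc a b j)))"
        by (simp add: sum_distrib_left)
      also have "\<dots> = (\<Sum>a<n. u a * (\<Sum>b<n. w b * (\<Sum>j<n. sc a j k * Q j b)))"
        using K k by simp
      also have "\<dots> = (\<Sum>a<n. \<Sum>b<n. \<Sum>j<n. u a * (w b * (sc a j k * Q j b)))"
        by (simp add: sum_distrib_left)
      also have "\<dots> = (\<Sum>a<n. \<Sum>j<n. \<Sum>b<n. u a * (w b * (sc a j k * Q j b)))"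
        by (rule sum.cong[OF refl], rule sum.swap)
      also have "\<dots> = (\<Sum>a<n. u a * (\<Sum>j<n. sc a j k * (\<Sum>b<n. Q j b * w b)))"
        by (simp add: sum_distrib_left mult_ac)
      also have "\<dots> = (\<Sum>a<n. u a * (\<Sum>j<n. sc a j k * (\<mu> * w j)))"
        using w by (simp add: V_def)
      also have "\<dots> = \<mu> * lie_br n sc u w k"
        using k by (simp add: lie_br_def sum_distrib_left mult_ac)
      finally show "(\<Sum>j<n. Q k j * lie_br n sc u w j) = \<mu> * lie_br n sc u w k" .
    qed
  qed
  define w0 where "w0 = (\<lambda>k. if k < n then v $ k else 0)"
  have w0V: "w0 \<in> V"
    unfolding V_def
  proof (intro CollectI conjI allI impI)
    show "w0 \<in> lie_vecs n" by (simp add: w0_def lie_vecs_def)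
    fix k assume k: "k < n"
    have "(M *\<^sub>v v) $ k = (\<Sum>j\<in>{0..<n}. Q k j * v $ j)"
      using k v(1) by (simp add: M_def scalar_prod_def)
    also have "\<dots> = (\<Sum>j<n. Q k j * w0 j)" by (simp add: w0_def lessThan_atLeast0)
    finally have "(M *\<^sub>v v) $ k = (\<Sum>j<n. Q k j * w0 j)" .
    then show "(\<Sum>j<n. Q k j * w0 j) = \<mu> * w0 k" using v(3) k v(1) by (simp add: w0_def)
  qed
  have "w0 \<noteq> (\<lambda>_. 0)"
  proof
    assume "w0 = (\<lambda>_. 0)"
    then have "v = 0\<^sub>v n" using v(1) by (intro eq_vecI) (auto simp: w0_def fun_eq_iff, metis)
    then show False using v(2) by simp
  qed
  then have "V = lie_vecs n" using slo_simple[OF g ideal] w0V by auto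
  show ?thesis
  proof (intro exI allI impI)
    fix a b assume a: "a < n" and b: "b < n"
    have "(\<lambda>k. if k = b then 1 else 0) \<in> V" using b \<open>V = lie_vecs n\<close> by (auto simp: lie_vecs_def)
    then have "(\<Sum>j<n. Q a j * (if j = b then 1 else 0)) = \<mu> * (if a = b then 1 else 0)"
      using a by (simp add: V_def)
    moreover have "(\<Sum>j<n. Q a j * (if j = b then 1 else 0)) = Q a b"
      using b by (simp add: if_distrib[of "\<lambda>x. Q a _ * x"] sum.delta cong: if_cong)
    ultimately show "Q a b = (if a = b then \<mu> else 0)" by simp
  qed
qed



lemma lookup_pderiv0: "lk (mp_pderiv e G) 0 = lk G (sg e 1)"
  by (simp add: lookup_pderiv)

lemma Q_formula: "lk (mp_pderiv a (mp_pderiv b F)) 0 = of_nat (lk (sg a 1) b + 1) * lk F (sg a 1 + sg b 1)"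
  by (simp add: lookup_pderiv0 lookup_pderiv)

lemma Q_sym: "lk (mp_pderiv a (mp_pderiv b F)) 0 = lk (mp_pderiv b (mp_pderiv a F)) 0"
  by (simp add: Q_formula lookup_single when_def add.commute)

lemma lookup_single_mult: "lk (sg k s * G) m = s * Sum_any (\<lambda>q. (lk G q when m = k + q))"
proof -
  have "lk (sg k s * G) m = Sum_any (\<lambda>l. ((s * Sum_any (\<lambda>q. (lk G q when m = l + q))) when k = l))"
    by (simp add: lookup_mult lookup_single when_mult)
  also have "\<dots> = s * Sum_any (\<lambda>q. (lk G q when m = k + q))" by simp
  finally show ?thesis .
qed

lemma lookup_const_mult: "lk (mp_const s * G) m = s * lk G m"
  by (simp add: mp_const_def lookup_single_mult)

lemma const_var: "mp_const s * mp_var b = sg (sg b 1) s"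
  by (simp add: mp_const_def mp_var_def mult_single)

lemma pm_add_left_cancel: "((a::nat \<Rightarrow>\<^sub>0 nat) + b = a + c) \<longleftrightarrow> b = c"
proof
  assume "a + b = a + c"
  then have "lk (a + b) i = lk (a + c) i" for i by simp
  then show "b = c" by (intro poly_mapping_eqI) (simp add: lookup_add)
qed simp

lemma coeff2:
  fixes G :: mpoly and b0 e0 b :: nat
  shows
  "Sum_any (\<lambda>q. (lk G q when sg b0 1 + sg e0 1 = sg b 1 + q)) =
     (if b = b0 then lk G (sg e0 1) else if b = e0 then lk G (sg b0 1) else 0)"
proof (cases "b = b0")
  case True
  have "(\<lambda>q. (lk G q when sg b0 1 + sg e0 1 = sg b 1 + q)) = (\<lambda>q. (lk G q when q = sg e0 1))"
  proof (rule ext)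
    fix q show "(lk G q when sg b0 1 + sg e0 1 = sg b 1 + q) = (lk G q when q = sg e0 1)"
    proof -
      have iff: "(sg b0 1 + sg e0 1 = sg b 1 + q) \<longleftrightarrow> (q = sg e0 1)"
        using True pm_add_left_cancel[of "sg b0 1" "sg e0 1" q] by metis
      show ?thesis by (simp only: iff)
    qed
  qed
  then show ?thesis using True by simp
next
  case F: False
  show ?thesis
  proof (cases "b = e0")
    case True
    have "(\<lambda>q. (lk G q when sg b0 1 + sg e0 1 = sg b 1 + q)) = (\<lambda>q. (lk G q when q = sg b0 1))"
    proof (rule ext)
      fix q show "(lk G q when sg b0 1 + sg e0 1 = sg b 1 + q) = (lk G q when q = sg b0 1)"
      proof -
        have iff: "(sg b0 1 + sg e0 1 = sg b 1 + q) \<longleftrightarrow> (q = sg b0 1)"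
          using True pm_add_left_cancel[of "sg e0 1" "sg b0 1" q] add.commute[of "sg b0 1" "sg e0 1"] by metis
        show ?thesis by (simp only: iff)
      qed
    qed
    then have "Sum_any (\<lambda>q. (lk G q when sg b0 1 + sg e0 1 = sg b 1 + q)) = lk G (sg b0 1)"
      by (simp only: Sum_any_when_equal)
    then show ?thesis using F True by simp
  next
    case False
    have "sg b0 1 + sg e0 1 \<noteq> sg b 1 + q" for q :: "nat \<Rightarrow>\<^sub>0 nat"
    proof
      assume "sg b0 1 + sg e0 1 = sg b 1 + q"
      then have "lk (sg b0 1 + sg e0 1) b = lk (sg b 1 + q) b" by simp
      then show False using F False by (simp add: lookup_add lookup_single when_def)
    qed
    then show ?thesis using F False by simp
  qed
qed

lemma sum_two_delta:
  fixes f :: "nat \<Rightarrow> complex"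
  assumes "b0 < n" "e0 < n"
  shows "(\<Sum>b<n. f b * (if b = b0 then X else if b = e0 then Y else 0)) =
     f b0 * X + (if b0 \<noteq> e0 then f e0 * Y else 0)"
proof -
  have "(\<Sum>b<n. f b * (if b = b0 then X else if b = e0 then Y else 0)) =
     (\<Sum>b<n. (if b = b0 then f b * X else 0) + (if b = e0 then (if b0 \<noteq> e0 then f b * Y else 0) else 0))"
    by (rule sum.cong) auto
  also have "\<dots> = f b0 * X + (if b0 \<noteq> e0 then f e0 * Y else 0)"
    using assms by (simp add: sum.distrib sum.delta)
  finally show ?thesis .
qed

lemma inv_coeff:
  assumes inv: "inv_poly n sc F" and c: "c < n" and b0: "b0 < n" and e0: "e0 < n"
  defines "Q \<equiv> \<lambda>x y. lk (mp_pderiv x (mp_pderiv y F)) 0"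
  shows "(\<Sum>a<n. sc c a b0 * Q e0 a) + (if b0 \<noteq> e0 then (\<Sum>a<n. sc c a e0 * Q b0 a) else 0) = 0"
proof -
  have z: "(\<Sum>a<n. \<Sum>b<n. mp_const (sc c a b) * mp_var b * mp_pderiv a F) = 0"
    using inv c unfolding inv_poly_def by blast
  have "0 = lk (\<Sum>a<n. \<Sum>b<n. mp_const (sc c a b) * mp_var b * mp_pderiv a F) (sg b0 1 + sg e0 1)"
    by (simp add: z)
  also have "\<dots> = (\<Sum>a<n. \<Sum>b<n. sc c a b * (if b = b0 then Q e0 a else if b = e0 then Q b0 a else 0))"
    unfolding Q_def lookup_pderiv0 by (simp add: lookup_sum const_var lookup_single_mult coeff2 del: One_nat_def)
  also have "\<dots> = (\<Sum>a<n. sc c a b0 * Q e0 a + (if b0 \<noteq> e0 then sc c a e0 * Q b0 a else 0))"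
    using sum_two_delta[OF b0 e0] by simp
  also have "\<dots> = (\<Sum>a<n. sc c a b0 * Q e0 a) + (if b0 \<noteq> e0 then (\<Sum>a<n. sc c a e0 * Q b0 a) else 0)"
    by (simp add: sum.distrib)
  finally show ?thesis by simp
qed

lemma inv_schur:
  assumes g: "simple_lie_onb n sc" and inv: "inv_poly n sc F"
  shows "\<exists>\<mu>. \<forall>a<n. \<forall>b<n. lk (mp_pderiv a (mp_pderiv b F)) 0 = (if a = b then \<mu> else 0)"
proof -
  define Q where "Q = (\<lambda>x y. lk (mp_pderiv x (mp_pderiv y F)) 0)"
  have sym: "\<forall>a<n. \<forall>b<n. Q a b = Q b a" unfolding Q_def using Q_sym by blast
  have comm: "\<forall>c<n. \<forall>b<n. \<forall>e<n. (\<Sum>a<n. sc c a b * Q a e) + (\<Sum>a<n. sc c a e * Q a b) = 0"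
  proof (intro allI impI)
    fix c b e assume c: "c < n" and b: "b < n" and e: "e < n"
    have h: "(\<Sum>a<n. sc c a b * Q e a) + (if b \<noteq> e then (\<Sum>a<n. sc c a e * Q b a) else 0) = 0"
      using inv_coeff[OF inv c b e] unfolding Q_def .
    have s1: "(\<Sum>a<n. sc c a b * Q e a) = (\<Sum>a<n. sc c a b * Q a e)" using Q_sym unfolding Q_def by simp
    have s2: "(\<Sum>a<n. sc c a e * Q b a) = (\<Sum>a<n. sc c a e * Q a b)" using Q_sym unfolding Q_def by simp
    show "(\<Sum>a<n. sc c a b * Q a e) + (\<Sum>a<n. sc c a e * Q a b) = 0"
    proof (cases "b = e")
      case True then show ?thesis using h s1 by simp
    next
      case False then show ?thesis using h s1 s2 by simp
    qed
  qed
  show ?thesis using schur[OF g sym comm] unfolding Q_def .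
qed



lemma homog_keys: "mp_homog d F \<Longrightarrow> m \<in> Poly_Mapping.keys F \<Longrightarrow> mdeg m = d"
  unfolding mp_homog_def mdeg_def by blast

lemma vars_keys: "mp_vars_below N F \<Longrightarrow> m \<in> Poly_Mapping.keys F \<Longrightarrow> i \<in> Poly_Mapping.keys m \<Longrightarrow> i < N"
  unfolding mp_vars_below_def by blast

lemma homog2_coeff:
  assumes hom: "mp_homog 2 F" and vars: "mp_vars_below n F"
    and Q: "\<forall>a<n. \<forall>b<n. lk (mp_pderiv a (mp_pderiv b F)) 0 = (if a = b then \<mu> else 0)"
  shows "lk F m = (if (\<exists>c<n. m = sg c 1 + sg c 1) then \<mu> / 2 else 0)"
proof (cases "m \<in> Poly_Mapping.keys F")
  case True
  then have "mdeg m = 2" using homog_keys[OF hom] by blast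
  then obtain a b where m: "m = sg a 1 + sg b 1" using deg2_decomp by blast
  have a: "a < n" using vars_keys[OF vars True, of a] m by (simp add: in_keys_iff lookup_add)
  have b: "b < n" using vars_keys[OF vars True, of b] m by (simp add: in_keys_iff lookup_add)
  have QF: "lk (mp_pderiv a (mp_pderiv b F)) 0 = of_nat (lk (sg a 1) b + 1) * lk F m"
    using Q_formula m by simp
  show ?thesis
  proof (cases "a = b")
    case True
    then have "\<mu> = 2 * lk F m" using QF Q a by simp
    then show ?thesis using True m a by auto
  next
    case False
    then have "lk F m = 0" using QF Q a b by (simp add: lookup_single)
    then show ?thesis using \<open>m \<in> Poly_Mapping.keys F\<close> by (simp add: in_keys_iff)
  qed
next
  case False
  then have z: "lk F m = 0" by (simp add: in_keys_iff)
  show ?thesis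
  proof (cases "\<exists>c<n. m = sg c 1 + sg c 1")
    case True
    then obtain c where c: "c < n" "m = sg c 1 + sg c 1" by blast
    have "lk (mp_pderiv c (mp_pderiv c F)) 0 = of_nat (lk (sg c 1) c + 1) * lk F m"
      using Q_formula c by simp
    then have "\<mu> = 0" using Q c z by simp
    then show ?thesis using z by simp
  qed (use z in auto)
qed

lemma homog2_mu_nonzero:
  assumes hom: "mp_homog 2 F" and vars: "mp_vars_below n F" and nz: "F \<noteq> 0"
    and Q: "\<forall>a<n. \<forall>b<n. lk (mp_pderiv a (mp_pderiv b F)) 0 = (if a = b then \<mu> else 0)"
  shows "\<mu> \<noteq> 0"
proof
  assume "\<mu> = 0"
  then have "\<forall>m. lk F m = 0" using homog2_coeff[OF hom vars Q] by simp
  then have "F = 0" by (intro poly_mapping_eqI) simp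
  then show False using nz by simp
qed

lemma homog0_keys: "mp_homog 0 P \<Longrightarrow> Poly_Mapping.keys P \<subseteq> {0}"
  using homog_keys mdeg_zero_iff by blast

lemma no_two_quadratic:
  fixes p :: "nat \<Rightarrow> mpoly"
  assumes g: "simple_lie_onb n sc"
    and p_inv: "\<forall>i<r. inv_poly n sc (p i) \<and> mp_homog (d i) (p i) \<and> p i \<noteq> 0"
    and p_indep: "\<forall>G. mp_vars_below r G \<and> mp_subst G p = 0 \<longrightarrow> G = 0"
    and i: "i < r" "i \<noteq> 0" and d0: "d 0 = 2" and di: "d i = 2"
  shows False
proof -
  have r0: "0 < r" using i by simp
  have inv0: "inv_poly n sc (p 0)" and hom0: "mp_homog 2 (p 0)" and nz0: "p 0 \<noteq> 0"
    using p_inv r0 d0 by auto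
  have invi: "inv_poly n sc (p i)" and homi: "mp_homog 2 (p i)" and nzi: "p i \<noteq> 0"
    using p_inv i di by auto
  have vars0: "mp_vars_below n (p 0)" and varsi: "mp_vars_below n (p i)"
    using inv0 invi unfolding inv_poly_def by auto
  obtain \<mu>0 where Q0: "\<forall>a<n. \<forall>b<n. lk (mp_pderiv a (mp_pderiv b (p 0))) 0 = (if a = b then \<mu>0 else 0)"
    using inv_schur[OF g inv0] by blast
  obtain \<mu>i where Qi: "\<forall>a<n. \<forall>b<n. lk (mp_pderiv a (mp_pderiv b (p i))) 0 = (if a = b then \<mu>i else 0)"
    using inv_schur[OF g invi] by blast
  have m0: "\<mu>0 \<noteq> 0" by (rule homog2_mu_nonzero[OF hom0 vars0 nz0 Q0])
  have mi: "\<mu>i \<noteq> 0" by (rule homog2_mu_nonzero[OF homi varsi nzi Qi])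
  define c where "c = \<mu>i / \<mu>0"
  have c0: "c \<noteq> 0" using m0 mi by (simp add: c_def)
  have propc: "lk (p i) m = c * lk (p 0) m" for m
    using homog2_coeff[OF hom0 vars0 Q0, of m] homog2_coeff[OF homi varsi Qi, of m] m0
    by (auto simp: c_def)
  define G :: mpoly where "G = sg (sg i 1) 1 + sg (sg 0 1) (- c)"
  have neq: "sg i 1 \<noteq> (sg 0 1 :: nat \<Rightarrow>\<^sub>0 nat)"
  proof
    assume "sg i 1 = (sg 0 1 :: nat \<Rightarrow>\<^sub>0 nat)"
    then have "lk (sg i 1) i = lk (sg 0 1 :: nat \<Rightarrow>\<^sub>0 nat) i" by simp
    then show False using i by (simp add: lookup_single)
  qed
  have lkG1: "lk G (sg i 1) = 1" using neq by (simp add: G_def lookup_add lookup_single)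
  have lkG0: "lk G (sg 0 1) = - c" using neq by (simp add: G_def lookup_add lookup_single)
  have keysG: "Poly_Mapping.keys G = {sg i 1, sg 0 1}"
  proof -
    have "lk G k = 0" if "k \<noteq> sg i 1" "k \<noteq> sg 0 1" for k
      using that by (simp add: G_def lookup_add lookup_single when_def)
    then show ?thesis using lkG1 lkG0 c0 by (auto simp: in_keys_iff)
  qed
  have "mp_subst G p = mp_const 1 * p i + mp_const (- c) * p 0"
    unfolding mp_subst_def keysG using neq lkG1 lkG0 by simp
  also have "\<dots> = 0"
    by (intro poly_mapping_eqI) (simp add: lookup_add lookup_const_mult propc)
  finally have s0: "mp_subst G p = 0" .
  have "mp_vars_below r G" unfolding mp_vars_below_def keysG using i r0 by auto
  then have "G = 0" using p_indep s0 by blast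
  then show False using lkG1 by simp
qed



lemma xg_carrier: "a < n \<Longrightarrow> xg a \<in> ext_carrier n"
  unfolding xg_def by (rule carrier_egen) simp
lemma yg_carrier: "a < n \<Longrightarrow> yg n a \<in> ext_carrier n"
  unfolding yg_def by (rule carrier_egen) simp

lemma brc_carrier:
  assumes "\<forall>a<n. U a \<in> ext_carrier n" "\<forall>b<n. V b \<in> ext_carrier n"
  shows "brc n sc U V k \<in> ext_carrier n"
  unfolding brc_def using assms
  by (intro carrier_sum carrier_scale carrier_emul) auto

lemma W_carrier: "brc n sc xg (yg n) k \<in> ext_carrier n"
  by (rule brc_carrier) (auto simp: xg_carrier yg_carrier)

lemma W_ideal: "k < n \<Longrightarrow> brc n sc xg (yg n) k \<in> ideal_I n sc"
  unfolding ideal_I_def by (rule ideal_gen) (auto simp: W_carrier)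

lemma epow_0: "epow u 0 = eone" by (simp add: epow_def)
lemma epow_Suc: "epow u (Suc k) = emul u (epow u k)" by (simp add: epow_def)

lemma epow_carrier: "u \<in> ext_carrier n \<Longrightarrow> epow u k \<in> ext_carrier n"
  by (induction k) (auto simp: epow_0 epow_Suc carrier_eone carrier_emul)

lemma epow_ideal: "u \<in> ext_ideal n G \<Longrightarrow> u \<in> ext_carrier n \<Longrightarrow> 0 < k \<Longrightarrow> epow u k \<in> ext_ideal n G"
  by (cases k) (auto simp: epow_Suc intro: ideal_mult_right epow_carrier)

lemma epow_scale: "epow (escale c u) k = escale (c ^ k) (epow u k)"
  by (induction k) (auto simp: epow_0 epow_Suc escale_one emul_scale_left emul_scale_right escale_escale mult.commute)

lemma foldr_carrier:
  "(\<forall>i\<in>set xs. E i \<in> ext_carrier n) \<Longrightarrow> foldr (\<lambda>i acc. emul (E i) acc) xs eone \<in> ext_carrier n"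
  by (induction xs) (auto simp: carrier_eone carrier_emul)

lemma foldr_ideal:
  "(\<forall>i\<in>set xs. E i \<in> ext_carrier n) \<Longrightarrow> (\<exists>i\<in>set xs. E i \<in> ext_ideal n G) \<Longrightarrow>
     foldr (\<lambda>i acc. emul (E i) acc) xs eone \<in> ext_ideal n G"
proof (induction xs)
  case Nil then show ?case by simp
next
  case (Cons x xs)
  show ?case
  proof (cases "E x \<in> ext_ideal n G")
    case True
    then show ?thesis using Cons.prems foldr_carrier[of xs E n]
      by (simp add: ideal_mult_right)
  next
    case False
    then have "foldr (\<lambda>i acc. emul (E i) acc) xs eone \<in> ext_ideal n G" using Cons by auto
    then show ?thesis using Cons.prems by (simp add: ideal_mult_left)
  qed
qed

lemma ext_eval_carrier: "(\<forall>i. w i \<in> ext_carrier n) \<Longrightarrow> ext_eval P w \<in> ext_carrier n"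
  unfolding ext_eval_def
  by (intro carrier_sum carrier_scale foldr_carrier) (auto simp: epow_carrier)

lemma ext_eval_ideal:
  assumes "\<forall>i. w i \<in> ext_carrier n" "\<forall>m\<in>Poly_Mapping.keys P. \<exists>i\<in>Poly_Mapping.keys m. w i \<in> ext_ideal n G"
  shows "ext_eval P w \<in> ext_ideal n G"
  unfolding ext_eval_def
proof (intro ideal_sum ideal_scale foldr_ideal)
  fix m assume m: "m \<in> Poly_Mapping.keys P"
  show "\<forall>i\<in>set (sorted_list_of_set (Poly_Mapping.keys m)). epow (w i) (lk m i) \<in> ext_carrier n"
    using assms by (auto simp: epow_carrier)
  obtain i where i: "i \<in> Poly_Mapping.keys m" "w i \<in> ext_ideal n G" using assms m by blast
  then have "epow (w i) (lk m i) \<in> ext_ideal n G"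
    using assms by (intro epow_ideal) (auto simp: in_keys_iff)
  then show "\<exists>i\<in>set (sorted_list_of_set (Poly_Mapping.keys m)). epow (w i) (lk m i) \<in> ext_ideal n G"
    using i by auto
qed

lemma ext_eval_const:
  assumes "Poly_Mapping.keys P \<subseteq> {0}"
  shows "ext_eval P w = escale (lk P 0) eone"
proof (cases "Poly_Mapping.keys P = {}")
  case True
  then have "lk P 0 = 0" by (simp add: in_keys_iff[symmetric])
  then show ?thesis using True by (simp add: ext_eval_def escale_zero_left)
next
  case False
  then have "Poly_Mapping.keys P = {0}" using assms by (metis subset_singletonD)
  then show ?thesis by (simp add: ext_eval_def)
qed

lemma hat_carrier: "hat n sc F \<in> ext_carrier n"
  unfolding hat_def
  by (intro carrier_sum carrier_emul ext_eval_carrier) (auto simp: W_carrier xg_carrier yg_carrier)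

lemma hat_ideal:
  assumes hom: "mp_homog d F" and d: "3 \<le> d" and vars: "mp_vars_below n F"
  shows "hat n sc F \<in> ideal_I n sc"
  unfolding hat_def ideal_I_def
proof (intro ideal_sum ideal_mult_right)
  fix a b assume a: "a \<in> {..<n}" and b: "b \<in> {..<n}"
  show "xg a \<in> ext_carrier n" using a by (simp add: xg_carrier)
  show "yg n b \<in> ext_carrier n" using b by (simp add: yg_carrier)
  let ?P = "mp_pderiv a (mp_pderiv b F)"
  have hP: "mp_homog (d - 1 - 1) ?P" by (intro pderiv_homog hom)
  have vP: "mp_vars_below n ?P" by (intro pderiv_vars vars)
  show "ext_eval ?P (brc n sc xg (yg n)) \<in> ext_ideal n
     ((\<lambda>k. brc n sc xg xg k) ` {..<n} \<union> (\<lambda>k. brc n sc xg (yg n) k) ` {..<n} \<union> (\<lambda>k. brc n sc (yg n) (yg n) k) ` {..<n})"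
  proof (rule ext_eval_ideal)
    show "\<forall>i. brc n sc xg (yg n) i \<in> ext_carrier n" by (simp add: W_carrier)
    show "\<forall>m\<in>Poly_Mapping.keys ?P. \<exists>i\<in>Poly_Mapping.keys m. brc n sc xg (yg n) i \<in> ext_ideal n
     ((\<lambda>k. brc n sc xg xg k) ` {..<n} \<union> (\<lambda>k. brc n sc xg (yg n) k) ` {..<n} \<union> (\<lambda>k. brc n sc (yg n) (yg n) k) ` {..<n})"
    proof
      fix m assume m: "m \<in> Poly_Mapping.keys ?P"
      then have "mdeg m = d - 1 - 1" using homog_keys[OF hP] by blast
      then have "m \<noteq> 0" using d by (auto simp: mdeg_def)
      then obtain i where i: "i \<in> Poly_Mapping.keys m" by (metis keys_eq_empty ex_in_conv)
      then have "i < n" using vars_keys[OF vP m] by blast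
      then show "\<exists>i\<in>Poly_Mapping.keys m. brc n sc xg (yg n) i \<in> ext_ideal n
         ((\<lambda>k. brc n sc xg xg k) ` {..<n} \<union> (\<lambda>k. brc n sc xg (yg n) k) ` {..<n} \<union> (\<lambda>k. brc n sc (yg n) (yg n) k) ` {..<n})"
        using i W_ideal[of i n sc] unfolding ideal_I_def by blast
    qed
  qed
qed

lemma hat_quad:
  assumes hom: "mp_homog 2 F"
    and Q: "\<forall>a<n. \<forall>b<n. lk (mp_pderiv a (mp_pderiv b F)) 0 = (if a = b then \<mu> else 0)"
  shows "hat n sc F = escale \<mu> (Selt n)"
proof -
  have "hat n sc F = (\<Sum>a<n. \<Sum>b<n. escale (if a = b then \<mu> else 0) (emul (xg a) (yg n b)))"
    unfolding hat_def
  proof (intro sum.cong refl)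
    fix a b assume a: "a \<in> {..<n}" and b: "b \<in> {..<n}"
    have "mp_homog (2 - 1 - 1) (mp_pderiv a (mp_pderiv b F))" by (intro pderiv_homog hom)
    then have "Poly_Mapping.keys (mp_pderiv a (mp_pderiv b F)) \<subseteq> {0}" using homog0_keys by simp
    then have eq: "ext_eval (mp_pderiv a (mp_pderiv b F)) (brc n sc xg (yg n)) = escale (if a = b then \<mu> else 0) eone"
      using ext_eval_const Q a b by simp
    then show "emul (emul (ext_eval (mp_pderiv a (mp_pderiv b F)) (brc n sc xg (yg n))) (xg a)) (yg n b) =
        escale (if a = b then \<mu> else 0) (emul (xg a) (yg n b))"
    proof -
      have "emul eone (xg a) = xg a" using a by (intro emul_eone_left[of _ n] xg_carrier) simp
      then show ?thesis using eq by (simp add: emul_scale_left)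
    qed
  qed
  also have "\<dots> = (\<Sum>a<n. escale \<mu> (emul (xg a) (yg n a)))"
  proof (intro sum.cong refl)
    fix a assume a: "a \<in> {..<n}"
    have "(\<Sum>b<n. escale (if a = b then \<mu> else 0) (emul (xg a) (yg n b))) =
          (\<Sum>b<n. if a = b then escale \<mu> (emul (xg a) (yg n b)) else 0)"
      by (intro sum.cong refl) (simp add: escale_zero_left)
    also have "\<dots> = escale \<mu> (emul (xg a) (yg n a))" using a by (simp add: sum.delta)
    finally show "(\<Sum>b<n. escale (if a = b then \<mu> else 0) (emul (xg a) (yg n b))) = escale \<mu> (emul (xg a) (yg n a))" .
  qed
  also have "\<dots> = escale \<mu> (Selt n)" by (simp add: Selt_def escale_sum)
  finally show ?thesis .
qed

theorem proposition2p9: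
  fixes n r :: nat and sc :: "nat \<Rightarrow> nat \<Rightarrow> nat \<Rightarrow> complex"
    and p :: "nat \<Rightarrow> mpoly" and d :: "nat \<Rightarrow> nat" and f :: mpoly
  assumes g: "simple_lie_onb n sc"
    and r: "1 \<le> r"
    and p_inv: "\<forall>i<r. inv_poly n sc (p i) \<and> mp_homog (d i) (p i) \<and> p i \<noteq> 0"
    and d1: "d 0 = 2"
    and d_mono: "\<forall>i j. i \<le> j \<and> j < r \<longrightarrow> d i \<le> d j"
    and p_gen: "\<forall>F. inv_poly n sc F \<longrightarrow> (\<exists>G. mp_vars_below r G \<and> F = mp_subst G p)"
    and p_indep: "\<forall>G. mp_vars_below r G \<and> mp_subst G p = 0 \<longrightarrow> G = 0"
    and f_vars: "mp_vars_below r f"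
    and f_hom: "mp_whomog (\<lambda>i. d i - 1) (dual_coxeter n sc) f"
    and f_zero: "ext_eval f (\<lambda>i. hat n sc (p i)) \<in> ideal_J n sc"
    and f_coeff: "Poly_Mapping.lookup f (Poly_Mapping.single 0 (dual_coxeter n sc)) \<noteq> 0"
  shows "epow (Selt n) (dual_coxeter n sc) \<in> ideal_I n sc"
proof -
  let ?h = "dual_coxeter n sc"
  have r0: "0 < r" using r by simp
  have inv0: "inv_poly n sc (p 0)" and hom0: "mp_homog 2 (p 0)" and nz0: "p 0 \<noteq> 0"
    using p_inv r0 d1 by auto
  have vars0: "mp_vars_below n (p 0)" using inv0 unfolding inv_poly_def by auto
  obtain \<mu>0 where Q0: "\<forall>a<n. \<forall>b<n. lk (mp_pderiv a (mp_pderiv b (p 0))) 0 = (if a = b then \<mu>0 else 0)"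
    using inv_schur[OF g inv0] by blast
  have m0nz: "\<mu>0 \<noteq> 0" by (rule homog2_mu_nonzero[OF hom0 vars0 nz0 Q0])
  define w where "w = (\<lambda>i. hat n sc (p i))"
  have wC: "\<forall>i. w i \<in> ext_carrier n" by (simp add: w_def hat_carrier)
  have w0: "w 0 = escale \<mu>0 (Selt n)" unfolding w_def by (rule hat_quad[OF hom0 Q0])
  have wI: "w i \<in> ideal_I n sc" if i: "0 < i" "i < r" for i
  proof -
    have "d 0 \<le> d i" using d_mono i by blast
    moreover have "d i \<noteq> 2"
    proof
      assume "d i = 2"
      then show False using no_two_quadratic[OF g p_inv p_indep, of i] i d1 by simp
    qed
    ultimately have "3 \<le> d i" using d1 by simp
    moreover have "mp_homog (d i) (p i)" "mp_vars_below n (p i)"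
      using p_inv i unfolding inv_poly_def by auto
    ultimately show ?thesis unfolding w_def by (intro hat_ideal) auto
  qed
  define m0 :: "nat \<Rightarrow>\<^sub>0 nat" where "m0 = sg 0 ?h"
  have m0key: "m0 \<in> Poly_Mapping.keys f" using f_coeff by (simp add: m0_def in_keys_iff)
  define T where "T = (\<lambda>m. escale (lk f m) (foldr (\<lambda>i acc. emul (epow (w i) (lk m i)) acc)
      (sorted_list_of_set (Poly_Mapping.keys m)) eone))"
  have ev: "ext_eval f w = T m0 + (\<Sum>m\<in>Poly_Mapping.keys f - {m0}. T m)"
    unfolding ext_eval_def T_def using m0key by (simp add: sum.remove)
  have rest: "(\<Sum>m\<in>Poly_Mapping.keys f - {m0}. T m) \<in> ideal_I n sc"
    unfolding ideal_I_def
  proof (intro ideal_sum)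
    fix m assume m: "m \<in> Poly_Mapping.keys f - {m0}"
    have ex: "\<exists>i\<in>Poly_Mapping.keys m. i \<noteq> 0"
    proof (rule ccontr)
      assume "\<not> (\<exists>i\<in>Poly_Mapping.keys m. i \<noteq> 0)"
      then have k0: "Poly_Mapping.keys m \<subseteq> {0}" by auto
      have wh: "(\<Sum>i\<in>Poly_Mapping.keys m. lk m i * (d i - 1)) = ?h"
        using f_hom m unfolding mp_whomog_def by blast
      show False
      proof (cases "Poly_Mapping.keys m = {}")
        case True
        then have "m = 0" by simp
        moreover have "?h = 0" using wh True by simp
        ultimately show False using m by (simp add: m0_def)
      next
        case False
        then have k: "Poly_Mapping.keys m = {0}" using k0 by (metis subset_singletonD)
        then have "lk m 0 = ?h" using wh d1 by simp
        then have "m = m0"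
        proof (intro poly_mapping_eqI)
          fix j assume h: "lk m 0 = ?h"
          show "lk m j = lk m0 j"
          proof (cases "j = 0")
            case True then show ?thesis using h by (simp add: m0_def)
          next
            case False
            then have "j \<notin> Poly_Mapping.keys m" using k by simp
            then have "lk m j = 0" by (simp add: in_keys_iff)
            then show ?thesis using False by (simp add: m0_def lookup_single)
          qed
        qed
        then show False using m by simp
      qed
    qed
    then obtain i where i: "i \<in> Poly_Mapping.keys m" "i \<noteq> 0" by blast
    have mf: "m \<in> Poly_Mapping.keys f" using m by (rule DiffD1)
    have ir: "i < r" by (rule vars_keys[OF f_vars mf i(1)])
    have "epow (w i) (lk m i) \<in> ideal_I n sc"
      using wI[of i] i ir wC unfolding ideal_I_def by (intro epow_ideal) (auto simp: in_keys_iff)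
    then show "T m \<in> ext_ideal n
       ((\<lambda>k. brc n sc xg xg k) ` {..<n} \<union> (\<lambda>k. brc n sc xg (yg n) k) ` {..<n} \<union> (\<lambda>k. brc n sc (yg n) (yg n) k) ` {..<n})"
      unfolding T_def ideal_I_def using i wC m
      by (intro ideal_scale foldr_ideal) (auto simp: epow_carrier)
  qed
  have T0: "T m0 = escale (lk f m0) (epow (w 0) ?h)"
  proof (cases "?h = 0")
    case True
    then show ?thesis by (simp add: T_def m0_def epow_0)
  next
    case False
    then have "Poly_Mapping.keys m0 = {0}" by (simp add: m0_def)
    moreover have "emul (epow (w 0) ?h) eone = epow (w 0) ?h"
      using wC by (intro emul_eone_right[of _ n] epow_carrier) auto
    ultimately show ?thesis by (simp add: T_def m0_def)
  qed
  have evI: "ext_eval f w \<in> ideal_I n sc"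
    using f_zero unfolding w_def[symmetric] ideal_J_def ideal_I_def by (rule ideal_mono) auto
  have "T m0 = ext_eval f w + escale (- 1) (\<Sum>m\<in>Poly_Mapping.keys f - {m0}. T m)"
    by (rule ext) (simp add: ev escale_def)
  then have TI: "T m0 \<in> ideal_I n sc"
    using evI rest unfolding ideal_I_def by (simp add: ideal_add ideal_scale)
  define c where "c = lk f m0 * \<mu>0 ^ ?h"
  have c0: "c \<noteq> 0" using f_coeff m0nz by (simp add: c_def m0_def)
  have "T m0 = escale c (epow (Selt n) ?h)"
    by (simp add: T0 w0 epow_scale escale_escale c_def)
  then have "escale (1 / c) (T m0) = epow (Selt n) ?h"
    using c0 by (simp add: escale_escale escale_one)
  then show ?thesis using TI unfolding ideal_I_def by (metis ideal_scale)
qed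


end
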